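(* Let $q$ be a prime power, and let $\mu_{q+1}$ denote the group of all $(q+1)$-th roots of unity in $\mathbb{F}_{q^2}$. Pick an integer $v$ and a polynomial $D(X)\in\mathbb{F}_{q^2}[X]$ such that the function $c\mapsto c^v D(c)^{q-1}$ permutes $\mu_{q+1}$. Let $m$ be a nonnegative integer, and let $s_1,\dots,s_m$ and $t_1,\dots,t_m$ be positive integers such that for each $i$ we have $\gcd(s_i+1,q)=1$ and $(q+1)/\gcd(t_i,q+1)$ is coprime to $s_i+1$. (1) If $r$ is a positive integer such that $\gcd(r,q-1)=1$ and $r\equiv v+\sum_{i=1}^m s_it_i\pmod{q+1}$, then $X^r B(X^{q-1})$ permutes $\mathbb{F}_{q^2}$, where $B(X):=D(X)\prod_{i=1}^m \sum_{j=0}^{s_i} X^{jt_i}$. (2) If $B(X)\in\mathbb{F}_{q^2}[X]$ satisfies $D(X)=B(X)\prod_{i=1}^m\sum_{j=0}^{s_i} X^{jt_i}$, and $r$ is a positive integer such that $\gcd(r,q-1)=1$ and $r\equiv v-\sum_{i=1}^m s_it_i\pmod{q+1}$, then $X^r B(X^{q-1})$ permutes $\mathbb{F}_{q^2}$.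
   Context: A polynomial $f(X)\in\mathbb{F}_{q^2}[X]$ is said to permute $\mathbb{F}_{q^2}$ (be a permutation polynomial) if the map $c\mapsto f(c)$ is a bijection of $\mathbb{F}_{q^2}$. For a polynomial $g$ (or expression $X^vD(X)^{q-1}$, which for $c\in\mu_{q+1}$ is well defined even if $v$ is negative), "permutes $\mu_{q+1}$" means that $c\mapsto g(c)$ maps $\mu_{q+1}$ bijectively onto itself. *)

theory Defs
  imports "HOL-Computational_Algebra.Computational_Algebra" "HOL-Number_Theory.Cong" "HOL-Library.Cardinality"
begin

definition prime_power :: "nat \<Rightarrow> bool" where
  "prime_power q \<longleftrightarrow> (\<exists>p k. prime p \<and> k > 0 \<and> q = p ^ k)"

definition roots_of_unity :: "nat \<Rightarrow> 'a::field set" where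
  "roots_of_unity n = {c. c ^ n = 1}"

definition geom_poly :: "nat \<Rightarrow> nat \<Rightarrow> 'a::comm_ring_1 poly" where
  "geom_poly s t = (\<Sum>j\<in>{0..s}. monom 1 (j * t))"

end

theory Submission
  imports Defs "HOL-Number_Theory.Residues"
begin

lemma ff_pow_card:
  fixes x :: "'a::{finite,field}"
  assumes "x \<noteq> 0"
  shows "x ^ (CARD('a) - 1) = 1"
proof -
  have "x ^ (CARD('a) - 1) * \<Prod>(UNIV-{0::'a}) = (\<Prod>y\<in>UNIV-{0::'a}. x * y)"
    by (simp add: prod.distrib mult_ac)
  also have "(\<Prod>y\<in>UNIV-{0}. x * y) = (\<Prod>y\<in>UNIV-{0::'a}. y)"
    by (rule prod.reindex_bij_witness[of _ "\<lambda>y. y / x" "\<lambda>y. x * y"]) (use assms in auto)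
  finally have "x ^ (CARD('a) - 1) * \<Prod>(UNIV-{0::'a}) = 1 * \<Prod>(UNIV-{0::'a})" by simp
  moreover have "\<Prod>(UNIV-{0::'a}) \<noteq> 0" by simp
  ultimately show ?thesis by (metis mult_right_cancel)
qed

lemma ff_char:
  fixes q :: nat
  assumes q: "prime_power q" and card: "CARD('a::{finite,field}) = q ^ 2"
  shows "prime CHAR('a) \<and> (\<exists>k>0. q = CHAR('a) ^ k)"
proof -
  obtain p k where pk: "prime p" "k > 0" "q = p ^ k" using q unfolding prime_power_def by blast
  have pc: "prime CHAR('a)"
    by (intro prime_CHAR_semidom finite_imp_CHAR_pos) simp
  have "CHAR('a) dvd p ^ (2*k)"
    using CHAR_dvd_CARD[where 'a='a] card pk by (simp add: power_mult [symmetric] mult.commute)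
  then have "CHAR('a) dvd p" using pc prime_dvd_power by blast
  then have "CHAR('a) = p" using pc pk(1) primes_dvd_imp_eq by blast
  then show ?thesis using pc pk by blast
qed

lemma pow_coprime_one:
  fixes u :: "'a::comm_ring_1"
  assumes "u ^ a = 1" "u ^ b = 1" "coprime a b" "a \<noteq> 0"
  shows "u = 1"
proof -
  obtain x y where "a * x = b * y + gcd a b" using bezout_nat[OF assms(4)] by blast
  then have "a * x = b * y + 1" using assms(3) by simp
  then have "u ^ (a * x) = u ^ (b * y) * u" by (simp add: power_add)
  then show ?thesis using assms by (simp add: power_mult)
qed

lemma powi_cong:
  fixes c :: "'a::field"
  assumes "c \<noteq> 0" "c ^ n = 1" "[a = b] (mod int n)"
  shows "c powi a = c powi b"
proof -
  obtain k where "a = b + int n * k"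
    using assms(3) by (metis cong_iff_lin cong_sym)
  then have "c powi a = c powi b * (c powi (int n)) powi k"
    using assms(1) by (simp add: power_int_add power_int_mult)
  then show ?thesis using assms(2) by simp
qed


locale ffq =
  fixes q :: nat and T :: "'a::{finite,field} itself"
  assumes q: "prime_power q" and card: "CARD('a) = q ^ 2"
begin

lemma q_ge2: "q \<ge> 2"
proof -
  obtain p k where pk: "prime p" "k > 0" "q = p ^ k" using q unfolding prime_power_def by blast
  have "p \<ge> 2" using pk(1) prime_ge_2_nat by blast
  have "p ^ 1 \<le> p ^ k" using pk(2) \<open>p \<ge> 2\<close> by (intro power_increasing) auto
  then show ?thesis using pk(3) \<open>p \<ge> 2\<close> by simp
qed

lemma frob: "((x::'a) + y) ^ q = x ^ q + y ^ q"
proof -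
  obtain k where "q = CHAR('a) ^ k" using ff_char[OF q card] by blast
  then show ?thesis using ff_char[OF q card] freshmans_dream' by blast
qed

lemma frob_minus1: "((x::'a) - 1) ^ q = x ^ q - 1"
proof -
  have "((x - 1) + 1) ^ q = (x - 1) ^ q + 1 ^ q" by (rule frob)
  then show ?thesis by simp
qed

lemma frob_nat: "(of_nat n :: 'a) ^ q = of_nat n"
proof (induction n)
  case 0 then show ?case using q_ge2 by simp
next
  case (Suc n)
  have "(of_nat n + 1 :: 'a) ^ q = of_nat n ^ q + 1 ^ q" by (rule frob)
  then show ?case using Suc by (simp add: add.commute)
qed

lemma nat_nonzero:
  assumes "gcd n q = 1" shows "(of_nat n :: 'a) \<noteq> 0"
proof
  assume "(of_nat n :: 'a) = 0"
  then have d: "CHAR('a) dvd n" using of_nat_eq_0_iff_char_dvd by blast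
  obtain k where k: "k > 0" "q = CHAR('a) ^ k" using ff_char[OF q card] by blast
  then have "CHAR('a) dvd q" by (simp add: dvd_power)
  with d have "CHAR('a) dvd gcd n q" by simp
  with assms ff_char[OF q card] show False by simp
qed

lemma nat_pow: "gcd n q = 1 \<Longrightarrow> (of_nat n :: 'a) ^ (q - 1) = 1"
proof -
  assume a: "gcd n q = 1"
  have "(of_nat n :: 'a) ^ (q - 1) * of_nat n = 1 * of_nat n"
    using frob_nat[of n] q_ge2 by (cases q) (auto simp: mult.commute)
  then show ?thesis using nat_nonzero[OF a] by simp
qed

lemma mu_nonzero: "c \<in> roots_of_unity (q + 1) \<Longrightarrow> (c::'a) \<noteq> 0"
  unfolding roots_of_unity_def by auto

lemma mu_conj: "c \<in> roots_of_unity (q + 1) \<Longrightarrow> (c::'a) ^ q * c = 1"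
  unfolding roots_of_unity_def by (simp add: mult.commute)

lemma mu_power: "c \<in> roots_of_unity (q + 1) \<Longrightarrow> (c::'a) ^ n \<in> roots_of_unity (q + 1)"
proof -
  assume "c \<in> roots_of_unity (q + 1)"
  then have "c ^ (q + 1) = 1" unfolding roots_of_unity_def by simp
  have "(c ^ n) ^ (q + 1) = c ^ (n * (q + 1))" by (rule power_mult[symmetric])
  also have "\<dots> = (c ^ (q + 1)) ^ n" by (subst mult.commute) (rule power_mult)
  finally have "(c ^ n) ^ (q + 1) = (c ^ (q + 1)) ^ n" .
  then show ?thesis using \<open>c ^ (q + 1) = 1\<close> unfolding roots_of_unity_def by simp
qed

lemma to_mu: "(x::'a) \<noteq> 0 \<Longrightarrow> x ^ (q - 1) \<in> roots_of_unity (q + 1)"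
proof -
  assume "x \<noteq> 0"
  have "(q - 1) * (q + 1) = CARD('a) - 1" using q_ge2 card
    by (simp add: power2_eq_square algebra_simps diff_mult_distrib)
  then have "(x ^ (q - 1)) ^ (q + 1) = x ^ (CARD('a) - 1)" by (simp only: power_mult [symmetric])
  then show ?thesis unfolding roots_of_unity_def
    using ff_pow_card[OF \<open>x \<noteq> 0\<close>] by simp
qed

lemma mu_minus1:
  assumes "z \<in> roots_of_unity (q + 1)" "z \<noteq> 1"
  shows "((z::'a) - 1) ^ (q - 1) * z = -1"
proof -
  have "(z - 1) ^ q * z = (z ^ q - 1) * z" using frob_minus1[of z] by simp
  then have "(z - 1) ^ q * z = z ^ q * z - z" by (simp add: algebra_simps)
  then have "(z - 1) ^ q * z = 1 - z" using mu_conj[OF assms(1)] by simp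
  moreover have "(z - 1) ^ q = (z - 1) ^ (q - 1) * (z - 1)"
    using q_ge2 by (cases q) (auto simp: mult.commute)
  ultimately have "((z - 1) ^ (q - 1) * z) * (z - 1) = (-1) * (z - 1)"
    by (simp add: algebra_simps)
  moreover have ne: "z - 1 \<noteq> 0" using assms(2) by simp
  ultimately show ?thesis using mult_right_cancel[OF ne] by blast
qed

lemma geom_val:
  assumes c: "(c::'a) \<in> roots_of_unity (q + 1)"
    and g1: "gcd (s + 1) q = 1"
    and cp: "coprime ((q + 1) div gcd t (q + 1)) (s + 1)"
  shows "poly (geom_poly s t) c ^ (q - 1) * c ^ (s * t) = 1"
proof -
  define y where "y = c ^ t"
  have y: "y \<in> roots_of_unity (q + 1)" unfolding y_def by (rule mu_power[OF c])
  have cst: "c ^ (s * t) = y ^ s" unfolding y_def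
    by (subst mult.commute) (rule power_mult)
  have G: "poly (geom_poly s t) c = (\<Sum>j<Suc s. y ^ j)"
  proof -
    have "poly (geom_poly s t) c = (\<Sum>j\<in>{0..s}. c ^ (j * t))"
      unfolding geom_poly_def by (simp add: poly_sum poly_monom)
    also have "\<dots> = (\<Sum>j\<in>{0..s}. y ^ j)" unfolding y_def
      by (intro sum.cong refl) (simp add: power_mult[symmetric] mult.commute)
    also have "{0..s} = {..<Suc s}" by auto
    finally show ?thesis .
  qed
  show ?thesis
  proof (cases "y = 1")
    case True
    then have "poly (geom_poly s t) c = of_nat (s + 1)" using G by simp
    then show ?thesis using nat_pow[OF g1] cst True by simp
  next
    case False
    define w where "w = y ^ (s + 1)"
    have w: "w \<in> roots_of_unity (q + 1)" unfolding w_def by (rule mu_power[OF y])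
    have w1: "w \<noteq> 1"
    proof
      assume "w = 1"
      define g where "g = gcd t (q + 1)"
      define n' where "n' = (q + 1) div g"
      have gd: "g dvd t" "g dvd (q + 1)" unfolding g_def by auto
      obtain a where a: "t = g * a" using gd(1) by blast
      obtain b where b: "q + 1 = g * b" using gd(2) by blast
      have gpos: "g > 0" unfolding g_def by simp
      have "n' = b" unfolding n'_def b using gpos by simp
      have "t div g = a" using a gpos by simp
      have tn: "t * n' = (t div g) * (q + 1)" using \<open>n' = b\<close> \<open>t div g = a\<close> a b by simp
      have "y ^ n' = c ^ (t * n')" unfolding y_def by (rule power_mult[symmetric])
      also have "\<dots> = c ^ ((q + 1) * (t div g))" using tn by (simp add: mult.commute)
      also have "\<dots> = (c ^ (q + 1)) ^ (t div g)" by (rule power_mult)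
      finally have "y ^ n' = (c ^ (q + 1)) ^ (t div g)" .
      then have "y ^ n' = 1" using c unfolding roots_of_unity_def by simp
      moreover have "y ^ (s + 1) = 1" using \<open>w = 1\<close> w_def by simp
      moreover have "coprime (s + 1) n'" using cp unfolding n'_def g_def
        by (simp add: coprime_commute)
      ultimately have "y = 1" by (intro pow_coprime_one[of y "s + 1" n']) auto
      with False show False by simp
    qed
    let ?G = "poly (geom_poly s t) c"
    have geo: "?G * (y - 1) = w - 1"
      unfolding G w_def using power_diff_1_eq[of y "Suc s"] by (simp add: mult.commute)
    have "(?G * (y - 1)) ^ (q - 1) = (w - 1) ^ (q - 1)" using geo by simp
    then have e1: "?G ^ (q - 1) * (y - 1) ^ (q - 1) = (w - 1) ^ (q - 1)"
      by (simp add: power_mult_distrib)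
    have e2: "(y - 1) ^ (q - 1) * y = -1" by (rule mu_minus1[OF y False])
    have e3: "(w - 1) ^ (q - 1) * w = -1" by (rule mu_minus1[OF w w1])
    have "(?G ^ (q - 1) * y ^ s) * ((y - 1) ^ (q - 1) * y) = (?G ^ (q - 1) * (y - 1) ^ (q - 1)) * (y ^ s * y)"
      by (simp add: algebra_simps)
    also have "\<dots> = (w - 1) ^ (q - 1) * w" using e1 unfolding w_def by simp
    finally have "(?G ^ (q - 1) * y ^ s) * (-1) = -1" using e2 e3 by simp
    then show ?thesis using cst by simp
  qed
qed

lemma prod_val:
  assumes c: "(c::'a) \<in> roots_of_unity (q + 1)"
    and g1: "\<forall>i<m. gcd (s i + 1) q = 1"
    and cp: "\<forall>i<m. coprime ((q + 1) div gcd (t i) (q + 1)) (s i + 1)"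
  shows "poly (\<Prod>i<m. geom_poly (s i) (t i)) c ^ (q - 1) * c ^ (\<Sum>i<m. s i * t i) = 1"
proof -
  have "poly (\<Prod>i<m. geom_poly (s i) (t i)) c ^ (q - 1) * c ^ (\<Sum>i<m. s i * t i)
      = (\<Prod>i<m. poly (geom_poly (s i) (t i)) c ^ (q - 1) * c ^ (s i * t i))"
    by (simp add: poly_prod prod_power_distrib power_sum prod.distrib)
  also have "\<dots> = 1"
    by (rule prod.neutral) (use geom_val[OF c] g1 cp in auto)
  finally show ?thesis .
qed

lemma crit:
  fixes h :: "'a poly" and g :: "'a \<Rightarrow> 'a"
  assumes r: "r > 0" "coprime r (q - 1)"
    and gb: "bij_betw g (roots_of_unity (q + 1)) (roots_of_unity (q + 1))"
    and geq: "\<forall>c\<in>roots_of_unity (q + 1). c ^ r * poly h c ^ (q - 1) = g c"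
  shows "bij (\<lambda>c::'a. c ^ r * poly h (c ^ (q - 1)))"
proof -
  let ?f = "\<lambda>c::'a. c ^ r * poly h (c ^ (q - 1))"
  let ?M = "roots_of_unity (q + 1) :: 'a set"
  have q1: "q - 1 > 0" using q_ge2 by simp
  have hnz: "poly h z \<noteq> 0" if "z \<in> ?M" for z
  proof
    assume "poly h z = 0"
    moreover have "g z = z ^ r * poly h z ^ (q - 1)" using geq that by simp
    ultimately have "g z = 0" using q1 by (simp add: zero_power)
    moreover have "g z \<in> ?M" using gb that bij_betwE by blast
    ultimately show False using mu_nonzero by blast
  qed
  have fnz: "?f x \<noteq> 0" if "x \<noteq> 0" for x using hnz[OF to_mu[OF that]] that by simp
  have fpow: "?f x ^ (q - 1) = g (x ^ (q - 1))" if "x \<noteq> 0" for x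
  proof -
    have "(x ^ r) ^ (q - 1) = x ^ (r * (q - 1))" by (rule power_mult[symmetric])
    also have "\<dots> = (x ^ (q - 1)) ^ r" by (subst mult.commute) (rule power_mult)
    finally have "(x ^ r) ^ (q - 1) = (x ^ (q - 1)) ^ r" .
    then have "?f x ^ (q - 1) = (x ^ (q - 1)) ^ r * poly h (x ^ (q - 1)) ^ (q - 1)"
      by (simp add: power_mult_distrib)
    also have "\<dots> = g (x ^ (q - 1))" using geq to_mu[OF that] by simp
    finally show ?thesis .
  qed
  have "inj ?f"
  proof (rule injI)
    fix x y assume e: "?f x = ?f y"
    show "x = y"
    proof (cases "x = 0 \<or> y = 0")
      case True
      have f0: "?f 0 = 0" using r(1) by simp
      show ?thesis
      proof (cases "x = 0")
        case True
        then have "?f y = 0" using e f0 by simp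
        then have "y = 0" using fnz by blast
        then show ?thesis using True by simp
      next
        case False
        then have "y = 0" using \<open>x = 0 \<or> y = 0\<close> by simp
        then have "?f x = 0" using e f0 by simp
        then have "x = 0" using fnz by blast
        then show ?thesis using False by simp
      qed
    next
      case False
      then have x0: "x \<noteq> 0" "y \<noteq> 0" by auto
      have "g (x ^ (q - 1)) = g (y ^ (q - 1))" using fpow[OF x0(1)] fpow[OF x0(2)] e by simp
      then have z: "x ^ (q - 1) = y ^ (q - 1)"
        using inj_onD[OF bij_betw_imp_inj_on[OF gb] _ to_mu[OF x0(1)] to_mu[OF x0(2)]] by simp
      then have "x ^ r * poly h (x ^ (q - 1)) = y ^ r * poly h (x ^ (q - 1))" using e by simp
      then have xr: "x ^ r = y ^ r" using hnz[OF to_mu[OF x0(1)]] by simp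
      define u where "u = x / y"
      have u1: "u ^ r = 1" using xr x0 by (simp add: u_def power_divide)
      have u2: "u ^ (q - 1) = 1" using z x0 by (simp add: u_def power_divide)
      have "u = 1" using pow_coprime_one[OF u1 u2 r(2)] r(1) by simp
      then show "x = y" using x0 by (simp add: u_def)
    qed
  qed
  then show ?thesis by (simp add: bij_def finite_UNIV_inj_surj)
qed

end

theorem corollary3:
  fixes q :: nat and v :: int and D :: "'a::{finite,field} poly"
    and m :: nat and s t :: "nat \<Rightarrow> nat"
  assumes q: "prime_power q"
    and card: "CARD('a) = q ^ 2"
    and Dperm: "bij_betw (\<lambda>c. c powi v * poly D c ^ (q - 1))
                  (roots_of_unity (q + 1)) (roots_of_unity (q + 1))"
    and s_pos: "\<forall>i<m. s i > 0" and t_pos: "\<forall>i<m. t i > 0"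
    and gcd1: "\<forall>i<m. gcd (s i + 1) q = 1"
    and cop: "\<forall>i<m. coprime ((q + 1) div gcd (t i) (q + 1)) (s i + 1)"
  shows
    "(\<forall>r::nat. r > 0 \<longrightarrow> coprime r (q - 1) \<longrightarrow>
        [int r = v + (\<Sum>i<m. int (s i * t i))] (mod int (q + 1)) \<longrightarrow>
        (let B = D * (\<Prod>i<m. geom_poly (s i) (t i)) in
           bij (\<lambda>c::'a. c ^ r * poly B (c ^ (q - 1)))))
     \<and>
     (\<forall>(B :: 'a poly) (r::nat). D = B * (\<Prod>i<m. geom_poly (s i) (t i)) \<longrightarrow>
        r > 0 \<longrightarrow> coprime r (q - 1) \<longrightarrow>
        [int r = v - (\<Sum>i<m. int (s i * t i))] (mod int (q + 1)) \<longrightarrow>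
        bij (\<lambda>c::'a. c ^ r * poly B (c ^ (q - 1))))"
proof -
  interpret F: ffq q "TYPE('a)" using q card by unfold_locales
  define S where "S = (\<Sum>i<m. s i * t i)"
  define P :: "'a poly" where "P = (\<Prod>i<m. geom_poly (s i) (t i))"
  have Ssum: "(\<Sum>i<m. int (s i * t i)) = int S" unfolding S_def by (simp add: of_nat_sum)
  have PS: "poly P c ^ (q - 1) * c ^ S = 1" if "c \<in> roots_of_unity (q + 1)" for c
    unfolding P_def S_def by (rule F.prod_val[OF that gcd1 cop])
  have c0: "c \<noteq> 0" and cq: "c ^ (q + 1) = 1" if "c \<in> roots_of_unity (q + 1)" for c :: 'a
    using that unfolding roots_of_unity_def by auto
  have part1: "bij (\<lambda>c::'a. c ^ r * poly (D * P) (c ^ (q - 1)))"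
    if r: "r > 0" "coprime r (q - 1)" and cg: "[int r = v + int S] (mod int (q + 1))" for r
  proof (rule F.crit[OF r Dperm], intro ballI)
    fix c :: 'a assume c: "c \<in> roots_of_unity (q + 1)"
    have "c powi int r = c powi (v + int S)" by (rule powi_cong[OF c0[OF c] cq[OF c] cg])
    then have cr: "c ^ r = c powi v * c ^ S" using c0[OF c] by (simp add: power_int_add)
    have "c ^ r * poly (D * P) c ^ (q - 1) = c powi v * poly D c ^ (q - 1) * (poly P c ^ (q - 1) * c ^ S)"
      by (simp add: cr power_mult_distrib mult_ac)
    then show "c ^ r * poly (D * P) c ^ (q - 1) = c powi v * poly D c ^ (q - 1)"
      using PS[OF c] by simp
  qed
  have part2: "bij (\<lambda>c::'a. c ^ r * poly B (c ^ (q - 1)))"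
    if BD: "D = B * P" and r: "r > 0" "coprime r (q - 1)"
      and cg: "[int r = v - int S] (mod int (q + 1))" for r B
  proof (rule F.crit[OF r Dperm], intro ballI)
    fix c :: 'a assume c: "c \<in> roots_of_unity (q + 1)"
    have "c powi int r = c powi (v - int S)" by (rule powi_cong[OF c0[OF c] cq[OF c] cg])
    then have "c ^ r * c ^ S = c powi (v - int S) * c powi (int S)" by simp
    also have "\<dots> = c powi (v - int S + int S)" by (rule power_int_add[symmetric]) (use c0[OF c] in simp)
    also have "\<dots> = c powi v" by simp
    finally have cr: "c powi v = c ^ r * c ^ S" by simp
    have "c powi v * poly D c ^ (q - 1) = c ^ r * poly B c ^ (q - 1) * (poly P c ^ (q - 1) * c ^ S)"
      by (simp add: cr BD power_mult_distrib mult_ac)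
    then show "c ^ r * poly B c ^ (q - 1) = c powi v * poly D c ^ (q - 1)"
      using PS[OF c] by simp
  qed
  show ?thesis
    using part1 part2 unfolding Ssum P_def[symmetric] Let_def by blast
qed

end
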